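(* Let $\phi=a|0\rangle\otimes|0\rangle+b|1\rangle\otimes|1\rangle\in\mathbb{C}^2\otimes\mathbb{C}^2$ with $a,b>0$, $b^2=1-a^2$, and $$a^2\in\Bigl[\tfrac12-\tfrac{\sqrt5}{6},\ \tfrac12+\tfrac{\sqrt5}{6}\Bigr].$$ Let $\sigma$ be the orthogonal projector onto $\mathbb{C}\phi$, and let $P_{\psi_1}$ be the orthogonal projector onto the span of $\psi_1=|0\rangle|0\rangle+|1\rangle|1\rangle$. Then $$\tilde\sigma=\sigma-\tfrac{ab}{3}\,(4P_{\psi_1}-\mathbf 1)$$ belongs to $\mathcal D$ and minimizes $\rho\mapsto\|\rho-\sigma\|_{\mathrm{HS}}^2$ over $\rho\in\mathcal D$, and $$E_{\mathrm{HS}}(\sigma)=\tfrac43 a^2b^2.$$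
   Context: $\mathcal T$ denotes the set of states (positive operators of trace one) on $\mathbb{C}^2\otimes\mathbb{C}^2$. The set of disentangled states is $\mathcal D=\{\rho\in\mathcal T:\rho=\sum_k p_k\rho^{(1)}_k\otimes\rho^{(2)}_k,\ p_k\ge0,\ \sum_k p_k=1,\ \rho^{(1)}_k,\rho^{(2)}_k \text{ states on }\mathbb{C}^2\}$. The Hilbert–Schmidt norm is $\|A\|_{\mathrm{HS}}^2=\mathrm{tr}(A^*A)$, and the Hilbert–Schmidt entanglement of a state $\sigma$ is $E_{\mathrm{HS}}(\sigma)=\min_{\rho\in\mathcal D}\|\rho-\sigma\|_{\mathrm{HS}}^2$. *)

theory Defs
  imports "HOL-Analysis.Analysis"
begin

text \<open>Qubit space C^2 = complex^2 (basis indices 0,1 :: 2).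
  Two-qubit space C^2 (x) C^2 = complex^(2 \<times> 2): basis vector |i>|j> has index (i,j).\<close>

type_synonym qvec = "complex ^ 2"
type_synonym qmat = "complex ^ 2 ^ 2"
type_synonym qqvec = "complex ^ (2 \<times> 2)"
type_synonym qqmat = "complex ^ (2 \<times> 2) ^ (2 \<times> 2)"

definition ket :: "2 \<Rightarrow> qvec" where
  "ket i = axis i 1"

definition tensor_vec :: "qvec \<Rightarrow> qvec \<Rightarrow> qqvec" where
  "tensor_vec v w = (\<chi> ij. v $ fst ij * w $ snd ij)"

definition tensor_mat :: "qmat \<Rightarrow> qmat \<Rightarrow> qqmat" where
  "tensor_mat A B = (\<chi> ij kl. A $ fst ij $ fst kl * B $ snd ij $ snd kl)"

definition adjoint_mat :: "complex ^ 'n ^ 'n \<Rightarrow> complex ^ 'n ^ 'n" where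
  "adjoint_mat A = (\<chi> i j. cnj (A $ j $ i))"

definition positive_op :: "complex ^ 'n ^ 'n \<Rightarrow> bool" where
  "positive_op A \<longleftrightarrow> (\<forall>v :: complex ^ 'n.
     (\<Sum>i\<in>UNIV. cnj (v $ i) * (A *v v) $ i) \<in> \<real> \<and>
     0 \<le> Re (\<Sum>i\<in>UNIV. cnj (v $ i) * (A *v v) $ i))"

definition is_state :: "complex ^ 'n ^ 'n \<Rightarrow> bool" where
  "is_state A \<longleftrightarrow> positive_op A \<and> trace A = 1"

definition states :: "qqmat set" where
  "states = {\<rho>. is_state \<rho>}"

definition disentangled :: "qqmat set" where
  "disentangled = {\<rho>. \<rho> \<in> states \<and>
     (\<exists>(n::nat) (p :: nat \<Rightarrow> real) (\<rho>1 :: nat \<Rightarrow> qmat) (\<rho>2 :: nat \<Rightarrow> qmat).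
        (\<forall>k<n. 0 \<le> p k \<and> is_state (\<rho>1 k) \<and> is_state (\<rho>2 k)) \<and>
        (\<Sum>k<n. p k) = 1 \<and>
        \<rho> = (\<Sum>k<n. p k *\<^sub>R tensor_mat (\<rho>1 k) (\<rho>2 k)))}"

definition hs_norm_sq :: "complex ^ 'n ^ 'n \<Rightarrow> real" where
  "hs_norm_sq A = Re (trace (adjoint_mat A ** A))"

definition E_HS :: "qqmat \<Rightarrow> real" where
  "E_HS \<sigma> = (INF \<rho>\<in>disentangled. hs_norm_sq (\<rho> - \<sigma>))"

definition proj_onto :: "complex ^ 'n \<Rightarrow> complex ^ 'n ^ 'n" where
  "proj_onto v = (\<chi> i j. v $ i * cnj (v $ j) / (\<Sum>k\<in>UNIV. of_real ((cmod (v $ k))\<^sup>2)))"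

end

theory Submission
  imports Defs
begin

lemma U2: "(UNIV::2 set) = {0,1}" using exhaust_2 by (metis UNIV_2 insert_commute zero_neq_one) 
lemma U22: "(UNIV::(2\<times>2) set) = {(0,0),(0,1),(1,0),(1,1)}"
  by (auto simp: U2 UNIV_Times_UNIV[symmetric] simp del: UNIV_Times_UNIV)
lemma sum22: "sum f (UNIV::(2\<times>2) set) = f (0,0) + f (0,1) + f(1,0) + f(1,1)"
  by (simp add: U22 add.assoc)
lemma sum2: "sum f (UNIV::2 set) = f 0 + f 1"
  by (simp add: U2)
lemma all22: "(\<forall>i::2\<times>2. P i) \<longleftrightarrow> P (0,0) \<and> P (0,1) \<and> P (1,0) \<and> P (1,1)"
  by (metis U22 UNIV_I empty_iff insert_iff)
lemma all2: "(\<forall>i::2. P i) \<longleftrightarrow> P 0 \<and> P 1"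
  by (metis U2 UNIV_I empty_iff insert_iff)
lemma ket_simps[simp]: "(ket 0) $ 0 = 1" "ket 0 $ 1 = 0" "ket 1 $ 1 = 1" "ket 1 $ 0 = 0"
  by (simp_all add: ket_def axis_def)

lemma complex_sc: "r *\<^sub>R (z::complex) = of_real r * z"
  by (simp add: scaleR_conv_of_real)



definition smr :: "real \<Rightarrow> real \<Rightarrow> 2\<times>2 \<Rightarrow> 2\<times>2 \<Rightarrow> real" where
  "smr a b i j = (if (i = (0,0) \<or> i = (1,1)) \<and> (j = (0,0) \<or> j = (1,1)) then
         (if i = (0,0) then a else b) * (if j = (0,0) then a else b) else 0)"

definition smat :: "real \<Rightarrow> real \<Rightarrow> qqmat" where
  "smat a b = (\<chi> i j. of_real (smr a b i j))"

definition xsr :: "real \<Rightarrow> real \<Rightarrow> real \<Rightarrow> 2\<times>2 \<Rightarrow> 2\<times>2 \<Rightarrow> real" where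
 "xsr p s z i j = (if i = j then (if i=(0,0) then p else if i=(1,1) then s else z)
     else if (i=(0,0) \<and> j=(1,1)) \<or> (i=(1,1) \<and> j=(0,0)) then z else 0)"

definition xst :: "real \<Rightarrow> real \<Rightarrow> real \<Rightarrow> qqmat" where
 "xst p s z = (\<chi> i j. of_real (xsr p s z i j))"

definition vec2 :: "complex \<Rightarrow> complex \<Rightarrow> qvec" where
  "vec2 x y = (\<chi> i. if i = 0 then x else y)"

lemma vec2_simps[simp]: "vec2 x y $ 0 = x" "vec2 x y $ 1 = y"
  by (simp_all add: vec2_def)

lemma qform2: "(\<Sum>i\<in>UNIV. cnj (v $ i) * ((A::qmat) *v v) $ i) =
   cnj (v$0) * (A$0$0 * v$0 + A$0$1 * v$1) + cnj (v$1) * (A$1$0 * v$0 + A$1$1 * v$1)"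
  by (simp add: sum2 matrix_vector_mult_def)

lemma state2:
  assumes "is_state (A::qmat)"
  shows "\<exists>p z. A$0$0 = of_real p \<and> A$1$1 = of_real (1-p) \<and> A$0$1 = z \<and> A$1$0 = cnj z
     \<and> 0 \<le> p \<and> p \<le> 1 \<and> (cmod z)\<^sup>2 \<le> p*(1-p)"
proof -
  have pos: "\<And>v. (\<Sum>i\<in>UNIV. cnj (v $ i) * (A *v v) $ i) \<in> \<real> \<and>
     0 \<le> Re (\<Sum>i\<in>UNIV. cnj (v $ i) * (A *v v) $ i)"
    using assms unfolding is_state_def positive_op_def by blast
  have tr: "A$0$0 + A$1$1 = 1" using assms unfolding is_state_def trace_def by (simp add: sum2)
  have h1: "Im (A$0$0) = 0" "Re (A$0$0) \<ge> 0" using pos[of "vec2 1 0"] by (auto simp: qform2 complex_is_Real_iff)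
  have h2: "Im (A$1$1) = 0" "Re (A$1$1) \<ge> 0" using pos[of "vec2 0 1"] by (auto simp: qform2 complex_is_Real_iff)
  have h3: "Im (A$0$1) + Im (A$1$0) = 0" using pos[of "vec2 1 1"] h1 h2 by (auto simp: qform2 complex_is_Real_iff)
  have h4: "Re (A$0$1) - Re (A$1$0) = 0" using pos[of "vec2 1 \<i>"] h1 h2 by (auto simp: qform2 complex_is_Real_iff)
  define p where "p = Re (A$0$0)"
  define z where "z = A$0$1"
  have e1: "A$0$0 = of_real p" using h1 p_def by (simp add: complex_eq_iff)
  have e2: "A$1$1 = of_real (1-p)" using h2 tr e1 by (simp add: complex_eq_iff)
  have e3: "A$1$0 = cnj z" using h3 h4 z_def by (simp add: complex_eq_iff)
  have p0: "0 \<le> p" "p \<le> 1" using h1 h2 e2 by (auto simp: p_def)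
  have q1: "0 \<le> (1-p) * (p*(1-p) - (Re z)\<^sup>2 - (Im z)\<^sup>2)"
  proof -
    have "0 \<le> Re (cnj (of_real (1-p)) * (of_real p * of_real (1-p) + z * (- cnj z)) + cnj (- cnj z) * (cnj z * of_real (1-p) + of_real (1-p) * (- cnj z)))"
      using pos[of "vec2 (of_real (1-p)) (- cnj z)"] unfolding qform2 e1 e2 e3 by (simp add: z_def)
    then show ?thesis by (simp add: algebra_simps power2_eq_square)
  qed
  have q2: "0 \<le> p * (p*(1-p) - (Re z)\<^sup>2 - (Im z)\<^sup>2)"
  proof -
    have "0 \<le> Re (cnj (- z) * (of_real p * (- z) + z * of_real p) + cnj (of_real p) * (cnj z * (- z) + of_real (1-p) * of_real p))"
      using pos[of "vec2 (- z) (of_real p)"] unfolding qform2 e1 e2 e3 by (simp add: z_def)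
    then show ?thesis by (simp add: algebra_simps power2_eq_square)
  qed
  have "(cmod z)\<^sup>2 \<le> p*(1-p)"
  proof -
    have "0 \<le> (1-p) * (p*(1-p) - (Re z)\<^sup>2 - (Im z)\<^sup>2) + p * (p*(1-p) - (Re z)\<^sup>2 - (Im z)\<^sup>2)"
      using q1 q2 by linarith
    also have "\<dots> = p*(1-p) - (cmod z)\<^sup>2" by (simp add: cmod_power2 algebra_simps)
    finally show ?thesis by simp
  qed
  then show ?thesis using e1 e2 e3 p0 z_def by blast
qed

lemma prod_bound:
  assumes "is_state (A::qmat)" "is_state (B::qmat)"
  shows "Re (A$0$0 * B$0$0 + A$1$1 * B$1$1 + A$0$1 * B$0$1 + A$1$0 * B$1$0) \<le> 1"
proof -
  obtain p z where A: "A$0$0 = of_real p" "A$1$1 = of_real (1-p)" "A$0$1 = z" "A$1$0 = cnj z"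
     "0 \<le> p" "p \<le> 1" "(cmod z)\<^sup>2 \<le> p*(1-p)" using state2[OF assms(1)] by auto
  obtain r w where B: "B$0$0 = of_real r" "B$1$1 = of_real (1-r)" "B$0$1 = w" "B$1$0 = cnj w"
     "0 \<le> r" "r \<le> 1" "(cmod w)\<^sup>2 \<le> r*(1-r)" using state2[OF assms(2)] by auto
  have e: "Re (A$0$0 * B$0$0 + A$1$1 * B$1$1 + A$0$1 * B$0$1 + A$1$0 * B$1$0)
     = p*r + (1-p)*(1-r) + 2 * Re (z*w)"
    unfolding A B by simp
  have "Re (z*w) \<le> cmod z * cmod w" using complex_Re_le_cmod[of "z*w"] by (simp add: norm_mult)
  moreover have "2 * (cmod z * cmod w) \<le> p*(1-r) + r*(1-p)"
  proof (rule power2_le_imp_le)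
    have "(cmod z)\<^sup>2 * (cmod w)\<^sup>2 \<le> (p*(1-p)) * (r*(1-r))"
      using A(7) B(7) by (intro mult_mono) (auto simp: A B)
    moreover have "4 * ((p*(1-p)) * (r*(1-r))) \<le> (p*(1-r) + r*(1-p))\<^sup>2"
    proof -
      have "0 \<le> (p*(1-r) - r*(1-p))\<^sup>2" by simp
      then show ?thesis by (simp add: power2_eq_square algebra_simps)
    qed
    ultimately show "(2 * (cmod z * cmod w))\<^sup>2 \<le> (p*(1-r) + r*(1-p))\<^sup>2"
      by (simp add: power_mult_distrib)
    show "0 \<le> p*(1-r) + r*(1-p)" using A B by simp
  qed
  ultimately show ?thesis unfolding e by (simp add: algebra_simps)
qed

lemma tensor_entry: "tensor_mat A B $ (i,j) $ (k,l) = A$i$k * B$j$l"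
  by (simp add: tensor_mat_def)

lemma dis_bound:
  assumes "\<rho> \<in> disentangled"
  shows "Re (\<rho>$(0,0)$(0,0) + \<rho>$(1,1)$(1,1) + \<rho>$(0,0)$(1,1) + \<rho>$(1,1)$(0,0)) \<le> 1"
    and "trace \<rho> = 1"
proof -
  show "trace \<rho> = 1" using assms unfolding disentangled_def states_def is_state_def by simp
  have "\<exists>(n::nat) p \<rho>1 \<rho>2. (\<forall>k<n. 0 \<le> p k \<and> is_state (\<rho>1 k) \<and> is_state (\<rho>2 k)) \<and>
     (\<Sum>k<n. p k) = (1::real) \<and> \<rho> = (\<Sum>k<n. p k *\<^sub>R tensor_mat (\<rho>1 k) (\<rho>2 k))"
    using assms unfolding disentangled_def by simp
  then obtain n :: nat and p \<rho>1 \<rho>2 where H0: "(\<forall>k<n. 0 \<le> p k \<and> is_state (\<rho>1 k) \<and> is_state (\<rho>2 k)) \<and>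
     (\<Sum>k<n. p k) = (1::real) \<and> \<rho> = (\<Sum>k<n. p k *\<^sub>R tensor_mat (\<rho>1 k) (\<rho>2 k))"
    by (elim exE)
  note H = conjunct1[OF H0] conjunct1[OF conjunct2[OF H0]] conjunct2[OF conjunct2[OF H0]]
  have "Re (\<rho>$(0,0)$(0,0) + \<rho>$(1,1)$(1,1) + \<rho>$(0,0)$(1,1) + \<rho>$(1,1)$(0,0))
     = (\<Sum>k<n. p k * Re (\<rho>1 k$0$0 * \<rho>2 k$0$0 + \<rho>1 k$1$1 * \<rho>2 k$1$1 + \<rho>1 k$0$1 * \<rho>2 k$0$1 + \<rho>1 k$1$0 * \<rho>2 k$1$0))"
    unfolding H(3) by (simp add: tensor_entry sum.distrib[symmetric] algebra_simps)
  also have "\<dots> \<le> (\<Sum>k<n. p k * 1)"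
    by (intro sum_mono mult_left_mono prod_bound) (use H(1) in auto)
  finally show "Re (\<rho>$(0,0)$(0,0) + \<rho>$(1,1)$(1,1) + \<rho>$(0,0)$(1,1) + \<rho>$(1,1)$(0,0)) \<le> 1"
    using H(2) by simp
qed
lemma hs_expand: "hs_norm_sq (A::complex^'n^'n) = (\<Sum>i\<in>UNIV. \<Sum>k\<in>UNIV. (cmod (A$k$i))\<^sup>2)"
proof -
  have "\<And>z::complex. cnj z * z = of_real ((cmod z)\<^sup>2)"
    by (metis complex_norm_square mult.commute of_real_power)
  then show ?thesis
    unfolding hs_norm_sq_def trace_def matrix_matrix_mult_def adjoint_mat_def
    by (simp add: Re_sum)
qed

lemma hs_lower: "(cmod (A$(0,0)$(0,0)))\<^sup>2 + (cmod (A$(0,1)$(0,1)))\<^sup>2 + (cmod (A$(1,0)$(1,0)))\<^sup>2 + (cmod (A$(1,1)$(1,1)))\<^sup>2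
   + (cmod (A$(0,0)$(1,1)))\<^sup>2 + (cmod (A$(1,1)$(0,0)))\<^sup>2 \<le> hs_norm_sq (A::qqmat)"
  unfolding hs_expand sum22 using zero_le_power2[of "cmod (A$(0,0)$(0,1))"] zero_le_power2[of "cmod (A$(0,0)$(1,0))"] zero_le_power2[of "cmod (A$(0,1)$(0,0))"] zero_le_power2[of "cmod (A$(0,1)$(1,0))"] zero_le_power2[of "cmod (A$(0,1)$(1,1))"] zero_le_power2[of "cmod (A$(1,0)$(0,0))"] zero_le_power2[of "cmod (A$(1,0)$(0,1))"] zero_le_power2[of "cmod (A$(1,0)$(1,1))"] zero_le_power2[of "cmod (A$(1,1)$(0,1))"] zero_le_power2[of "cmod (A$(1,1)$(1,0))"]
  by linarith


lemma hs_real: "hs_norm_sq ((\<chi> i j. of_real (f i j)) :: qqmat) = (\<Sum>i\<in>UNIV. \<Sum>k\<in>UNIV. (f k i)\<^sup>2)"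
  unfolding hs_expand by simp

lemma core:
  fixes x00 x01 x10 x11 y z a b c :: real
  assumes "a\<^sup>2 + b\<^sup>2 = 1" "x00+x01+x10+x11 = 1" "x00+x11+y+z \<le> 1" "c \<ge> 0"
  shows "12 * c\<^sup>2 \<le> (x00 - a\<^sup>2)\<^sup>2 + x01\<^sup>2 + x10\<^sup>2 + (x11 - b\<^sup>2)\<^sup>2 + (y - 3*c)\<^sup>2 + (z - 3*c)\<^sup>2"
proof -
  define B where "B = x00 - x01 - x10 + x11 + 2*y + 2*z - a\<^sup>2 - b\<^sup>2"
  have B: "B \<le> 0" using assms unfolding B_def by linarith
  have "(x00 - a\<^sup>2)\<^sup>2 + x01\<^sup>2 + x10\<^sup>2 + (x11 - b\<^sup>2)\<^sup>2 + (y - 3*c)\<^sup>2 + (z - 3*c)\<^sup>2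
     = (x00 - a\<^sup>2 + c)\<^sup>2 + (x01 - c)\<^sup>2 + (x10 - c)\<^sup>2 + (x11 - b\<^sup>2 + c)\<^sup>2 + (y - c)\<^sup>2 + (z - c)\<^sup>2
       - 2 * c * B + 12 * c\<^sup>2"
    unfolding B_def by (simp add: power2_eq_square algebra_simps)
  moreover have "0 \<le> - 2 * c * B" using B assms(4) by (simp add: mult_nonneg_nonpos)
  ultimately show ?thesis
    using zero_le_power2[of "x00 - a\<^sup>2 + c"] zero_le_power2[of "x01 - c"] zero_le_power2[of "x10 - c"]
      zero_le_power2[of "x11 - b\<^sup>2 + c"] zero_le_power2[of "y - c"] zero_le_power2[of "z - c"]
    by linarith
qed

lemma sq_ge: "(Re z - s)\<^sup>2 \<le> (cmod (z - of_real s))\<^sup>2"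
proof -
  have "(Re (z - of_real s))\<^sup>2 \<le> (cmod (z - of_real s))\<^sup>2"
    by (simp add: cmod_power2)
  then show ?thesis by simp
qed

lemma opt:
  fixes a b :: real
  assumes "a\<^sup>2 + b\<^sup>2 = 1" "a > 0" "b > 0"
    and R: "Re (\<rho>$(0,0)$(0,0) + \<rho>$(1,1)$(1,1) + \<rho>$(0,0)$(1,1) + \<rho>$(1,1)$(0,0)) \<le> 1"
    and T: "trace \<rho> = 1"
  shows "hs_norm_sq (xst (a\<^sup>2 - a*b/3) (b\<^sup>2 - a*b/3) (a*b/3) - smat a b) = 4/3 * a\<^sup>2 * b\<^sup>2"
    and "hs_norm_sq (xst (a\<^sup>2 - a*b/3) (b\<^sup>2 - a*b/3) (a*b/3) - smat a b) \<le> hs_norm_sq (\<rho> - smat a b)"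
proof -
  have eqd: "xst (a\<^sup>2 - a*b/3) (b\<^sup>2 - a*b/3) (a*b/3) - smat a b = (\<chi> i j. of_real (xsr (a\<^sup>2 - a*b/3) (b\<^sup>2 - a*b/3) (a*b/3) i j - smr a b i j))"
    unfolding xst_def smat_def vec_eq_iff by simp
  show 1: "hs_norm_sq (xst (a\<^sup>2 - a*b/3) (b\<^sup>2 - a*b/3) (a*b/3) - smat a b) = 4/3 * a\<^sup>2 * b\<^sup>2"
    unfolding eqd hs_real by (simp add: sum22 xsr_def smr_def power2_eq_square algebra_simps)
  have "(Re (\<rho>$(0,0)$(0,0)) - a\<^sup>2)\<^sup>2 + (Re (\<rho>$(0,1)$(0,1)) - 0)\<^sup>2 + (Re (\<rho>$(1,0)$(1,0)) - 0)\<^sup>2 + (Re (\<rho>$(1,1)$(1,1)) - b\<^sup>2)\<^sup>2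
     + (Re (\<rho>$(0,0)$(1,1)) - a*b)\<^sup>2 + (Re (\<rho>$(1,1)$(0,0)) - a*b)\<^sup>2 \<le> hs_norm_sq (\<rho> - smat a b)"
  proof -
    have e: "(\<rho> - smat a b)$(0,0)$(0,0) = \<rho>$(0,0)$(0,0) - of_real (a\<^sup>2)"
       "(\<rho> - smat a b)$(0,1)$(0,1) = \<rho>$(0,1)$(0,1) - of_real 0"
       "(\<rho> - smat a b)$(1,0)$(1,0) = \<rho>$(1,0)$(1,0) - of_real 0"
       "(\<rho> - smat a b)$(1,1)$(1,1) = \<rho>$(1,1)$(1,1) - of_real (b\<^sup>2)"
       "(\<rho> - smat a b)$(0,0)$(1,1) = \<rho>$(0,0)$(1,1) - of_real (a*b)"
       "(\<rho> - smat a b)$(1,1)$(0,0) = \<rho>$(1,1)$(0,0) - of_real (a*b)"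
      by (simp_all add: smat_def smr_def power2_eq_square mult.commute)
    have "(Re (\<rho>$(0,0)$(0,0)) - a\<^sup>2)\<^sup>2 + (Re (\<rho>$(0,1)$(0,1)) - 0)\<^sup>2 + (Re (\<rho>$(1,0)$(1,0)) - 0)\<^sup>2 + (Re (\<rho>$(1,1)$(1,1)) - b\<^sup>2)\<^sup>2
     + (Re (\<rho>$(0,0)$(1,1)) - a*b)\<^sup>2 + (Re (\<rho>$(1,1)$(0,0)) - a*b)\<^sup>2 \<le>
      (cmod (\<rho>$(0,0)$(0,0) - of_real (a\<^sup>2)))\<^sup>2 + (cmod (\<rho>$(0,1)$(0,1) - of_real 0))\<^sup>2 + (cmod (\<rho>$(1,0)$(1,0) - of_real 0))\<^sup>2
      + (cmod (\<rho>$(1,1)$(1,1) - of_real (b\<^sup>2)))\<^sup>2 + (cmod (\<rho>$(0,0)$(1,1) - of_real (a*b)))\<^sup>2 + (cmod (\<rho>$(1,1)$(0,0) - of_real (a*b)))\<^sup>2"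
      by (intro add_mono sq_ge)
    also have "\<dots> \<le> hs_norm_sq (\<rho> - smat a b)"
      using hs_lower[of "\<rho> - smat a b"] unfolding e .
    finally show ?thesis .
  qed
  moreover have "12 * (a*b/3)\<^sup>2 \<le> (Re (\<rho>$(0,0)$(0,0)) - a\<^sup>2)\<^sup>2 + (Re (\<rho>$(0,1)$(0,1)) - 0)\<^sup>2 + (Re (\<rho>$(1,0)$(1,0)) - 0)\<^sup>2 + (Re (\<rho>$(1,1)$(1,1)) - b\<^sup>2)\<^sup>2
     + (Re (\<rho>$(0,0)$(1,1)) - 3*(a*b/3))\<^sup>2 + (Re (\<rho>$(1,1)$(0,0)) - 3*(a*b/3))\<^sup>2"
  proof -
    have "Re (trace \<rho>) = 1" using T by simp
    then have t: "Re (\<rho>$(0,0)$(0,0)) + Re (\<rho>$(0,1)$(0,1)) + Re (\<rho>$(1,0)$(1,0)) + Re (\<rho>$(1,1)$(1,1)) = 1"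
      unfolding trace_def sum22 by simp
    show ?thesis using core[OF assms(1) t, of "Re (\<rho>$(0,0)$(1,1))" "Re (\<rho>$(1,1)$(0,0))" "a*b/3"] R assms(2,3)
      by simp
  qed
  moreover have "12 * (a*b/3)\<^sup>2 = 4/3 * a\<^sup>2 * b\<^sup>2" by (simp add: power2_eq_square)
  ultimately show "hs_norm_sq (xst (a\<^sup>2 - a*b/3) (b\<^sup>2 - a*b/3) (a*b/3) - smat a b) \<le> hs_norm_sq (\<rho> - smat a b)"
    using 1 by simp
qed
definition m2 :: "complex \<Rightarrow> complex \<Rightarrow> complex \<Rightarrow> complex \<Rightarrow> qmat" where
  "m2 p z w q = (\<chi> i j. if i = 0 then (if j = 0 then p else z) else (if j = 0 then w else q))"

lemma m2_simps[simp]: "m2 p z w q $ 0 $ 0 = p" "m2 p z w q $ 0 $ 1 = z" "m2 p z w q $ 1 $ 0 = w" "m2 p z w q $ 1 $ 1 = q"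
  by (simp_all add: m2_def)

lemma quad_nonneg:
  fixes P Q Z x y :: real
  assumes "0 \<le> P" "0 \<le> Q" "Z\<^sup>2 \<le> P*Q" "0 \<le> x" "0 \<le> y"
  shows "2 * Z * x * y \<le> P * x\<^sup>2 + Q * y\<^sup>2"
proof -
  have "Z \<le> sqrt P * sqrt Q"
    using real_le_rsqrt[OF assms(3)] by (simp add: real_sqrt_mult)
  then have "2 * Z * x * y \<le> 2 * (sqrt P * x) * (sqrt Q * y)"
  proof -
    have "Z*(x*y) \<le> (sqrt P * sqrt Q)*(x*y)" using \<open>Z \<le> _\<close> assms by (intro mult_right_mono) auto
    then show ?thesis by (simp add: algebra_simps)
  qed
  also have "\<dots> \<le> (sqrt P * x)\<^sup>2 + (sqrt Q * y)\<^sup>2"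
    using zero_le_power2[of "sqrt P * x - sqrt Q * y"] by (simp add: power2_eq_square algebra_simps)
  also have "\<dots> = P * x\<^sup>2 + Q * y\<^sup>2" using assms by (simp add: power_mult_distrib)
  finally show ?thesis .
qed

lemma m2_state:
  fixes P Q :: real
  assumes "0 \<le> P" "0 \<le> Q" "P + Q = 1" "(cmod z)\<^sup>2 \<le> P * Q"
  shows "is_state (m2 (of_real P) z (cnj z) (of_real Q))"
  unfolding is_state_def positive_op_def
proof (intro conjI allI)
  show "trace (m2 (of_real P) z (cnj z) (of_real Q)) = 1"
    using assms(3) by (simp add: trace_def sum2 flip: of_real_add)
  fix v :: qvec
  let ?w = "cnj (v$0) * z * v$1"
  have e: "(\<Sum>i\<in>UNIV. cnj (v $ i) * (m2 (of_real P) z (cnj z) (of_real Q) *v v) $ i)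
     = of_real (P * (cmod (v$0))\<^sup>2 + Q * (cmod (v$1))\<^sup>2) + (?w + cnj ?w)"
  proof -
    have cn: "\<And>u. u * cnj u = (of_real (cmod u))\<^sup>2"
      by (metis complex_norm_square of_real_power)
    show ?thesis unfolding qform2 by (simp add: algebra_simps cn)
  qed
  have "?w + cnj ?w = of_real (2 * Re ?w)" by (rule complex_add_cnj)
  then have e2: "(\<Sum>i\<in>UNIV. cnj (v $ i) * (m2 (of_real P) z (cnj z) (of_real Q) *v v) $ i)
     = of_real (P * (cmod (v$0))\<^sup>2 + Q * (cmod (v$1))\<^sup>2 + 2 * Re ?w)"
    unfolding e by simp
  then show "(\<Sum>i\<in>UNIV. cnj (v $ i) * (m2 (of_real P) z (cnj z) (of_real Q) *v v) $ i) \<in> \<real>" by simp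
  have "- Re ?w \<le> cmod ?w" using abs_Re_le_cmod[of ?w] by linarith
  also have "cmod ?w = cmod z * cmod (v$0) * cmod (v$1)" by (simp add: norm_mult)
  finally have "- Re ?w \<le> cmod z * cmod (v$0) * cmod (v$1)" .
  moreover have "2 * cmod z * cmod (v$0) * cmod (v$1) \<le> P * (cmod (v$0))\<^sup>2 + Q * (cmod (v$1))\<^sup>2"
    using assms by (intro quad_nonneg) (auto simp: power2_eq_square)
  ultimately show "0 \<le> Re (\<Sum>i\<in>UNIV. cnj (v $ i) * (m2 (of_real P) z (cnj z) (of_real Q) *v v) $ i)"
    unfolding e2 by simp
qed

lemma xst_state:
  fixes p s z :: real
  assumes "0 \<le> p" "0 \<le> s" "0 \<le> z" "z\<^sup>2 \<le> p * s" "p + s + 2*z = 1"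
  shows "is_state (xst p s z)"
  unfolding is_state_def positive_op_def
proof (intro conjI allI)
  show "trace (xst p s z) = 1"
    using assms(5) by (simp add: trace_def sum22 xst_def xsr_def flip: of_real_add)
  fix v :: qqvec
  let ?w = "cnj (v$(0,0)) * v$(1,1)"
  have e: "(\<Sum>i\<in>UNIV. cnj (v $ i) * (xst p s z *v v) $ i)
     = of_real (p * (cmod (v$(0,0)))\<^sup>2 + z * (cmod (v$(0,1)))\<^sup>2 + z * (cmod (v$(1,0)))\<^sup>2 + s * (cmod (v$(1,1)))\<^sup>2)
       + of_real z * (?w + cnj ?w)"
  proof -
    have cn: "\<And>u. u * cnj u = (of_real (cmod u))\<^sup>2"
      by (metis complex_norm_square of_real_power)
    show ?thesis unfolding matrix_vector_mult_def
      by (simp add: sum22 xst_def xsr_def algebra_simps cn)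
  qed
  have "?w + cnj ?w = of_real (2 * Re ?w)" by (rule complex_add_cnj)
  then have e2: "(\<Sum>i\<in>UNIV. cnj (v $ i) * (xst p s z *v v) $ i)
     = of_real (p * (cmod (v$(0,0)))\<^sup>2 + z * (cmod (v$(0,1)))\<^sup>2 + z * (cmod (v$(1,0)))\<^sup>2 + s * (cmod (v$(1,1)))\<^sup>2
        + z * (2 * Re ?w))"
    unfolding e by simp
  then show "(\<Sum>i\<in>UNIV. cnj (v $ i) * (xst p s z *v v) $ i) \<in> \<real>" by simp
  have "- Re ?w \<le> cmod ?w" using abs_Re_le_cmod[of ?w] by linarith
  also have "cmod ?w = cmod (v$(0,0)) * cmod (v$(1,1))" by (simp add: norm_mult)
  finally have "- Re ?w \<le> cmod (v$(0,0)) * cmod (v$(1,1))" .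
  then have "2*z*(- Re ?w) \<le> 2*z*(cmod (v$(0,0)) * cmod (v$(1,1)))"
    by (rule mult_left_mono) (use assms(3) in auto)
  then have "- (z * (2 * Re ?w)) \<le> 2 * z * cmod (v$(0,0)) * cmod (v$(1,1))"
    by (simp add: algebra_simps)
  moreover have "2 * z * cmod (v$(0,0)) * cmod (v$(1,1)) \<le> p * (cmod (v$(0,0)))\<^sup>2 + s * (cmod (v$(1,1)))\<^sup>2"
    using assms by (intro quad_nonneg) auto
  moreover have "0 \<le> z * (cmod (v$(0,1)))\<^sup>2 + z * (cmod (v$(1,0)))\<^sup>2" using assms(3) by simp
  ultimately show "0 \<le> Re (\<Sum>i\<in>UNIV. cnj (v $ i) * (xst p s z *v v) $ i)"
    unfolding e2 by simp
qed
definition om :: "nat \<Rightarrow> complex" where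
  "om k = (if k = 0 then 1 else if k = 1 then \<i> else if k = 2 then -1 else -\<i>)"

lemma lt5: "{..<5::nat} = {0,1,2,3,4}" by auto

lemma xst_decomp:
  fixes al de c :: real
  assumes "0 < al" "0 \<le> de" "0 < c" "c\<^sup>2 \<le> al * de" "al + de + 2*c = 1"
  defines "A \<equiv> sqrt al" and "s \<equiv> sqrt c"
  defines "N \<equiv> A + c / A"
  defines "u \<equiv> A / N" and "t \<equiv> c / A / N" and "r \<equiv> s / N"
  defines "\<rho>1 \<equiv> (\<lambda>k. if k < 4 then m2 (of_real u) (of_real r * cnj (om k)) (cnj (of_real r * cnj (om k))) (of_real t)
                    else m2 (of_real 0) 0 (cnj 0) (of_real 1))"
  defines "\<rho>2 \<equiv> (\<lambda>k. if k < 4 then m2 (of_real u) (of_real r * om k) (cnj (of_real r * om k)) (of_real t)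
                    else m2 (of_real 0) 0 (cnj 0) (of_real 1))"
  defines "p \<equiv> (\<lambda>k::nat. if k < 4 then N\<^sup>2 / 4 else de - c\<^sup>2 / al)"
  shows "xst al de c = (\<Sum>k<5. p k *\<^sub>R tensor_mat (\<rho>1 k) (\<rho>2 k))"
proof -
  have A0: "A > 0" using assms(1) A_def by simp
  have AA: "A * A = al" using assms(1) A_def by simp
  have ss: "s * s = c" using assms(3) s_def by simp
  have N0: "N > 0" unfolding N_def using A0 assms(3) by (intro add_pos_pos divide_pos_pos)
  have f1: "u * (u * N\<^sup>2) = al" using N0 AA unfolding u_def by (simp add: field_simps power2_eq_square)
  have f2: "r * (r * N\<^sup>2) = c" using N0 ss unfolding r_def by (simp add: field_simps power2_eq_square)
  have f3: "t * (u * N\<^sup>2) = c" using N0 A0 unfolding u_def t_def by (simp add: field_simps power2_eq_square)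
  have f4: "t * (t * N\<^sup>2) = c\<^sup>2 / al" using N0 A0 AA unfolding t_def by (simp add: field_simps power2_eq_square)
  have sc: "\<And>x (z::complex). x *\<^sub>R z = of_real x * z" by (simp add: scaleR_conv_of_real)
  show ?thesis
    unfolding vec_eq_iff all22
    apply (simp add: lt5 tensor_entry sc xst_def xsr_def \<rho>1_def \<rho>2_def p_def om_def)
    by (simp_all add: complex_eq_iff f1 f2 f3 f4)
qed

lemma xst_dis:
  fixes al de c :: real
  assumes "0 < al" "0 \<le> de" "0 < c" "c\<^sup>2 \<le> al * de" "al + de + 2*c = 1"
  shows "xst al de c \<in> disentangled"
proof -
  define A where "A = sqrt al"
  define s where "s = sqrt c"
  define N where "N = A + c / A"
  define u where "u = A / N"
  define t where "t = c / A / N"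
  define r where "r = s / N"
  define \<rho>1 where "\<rho>1 = (\<lambda>k. if k < 4 then m2 (of_real u) (of_real r * cnj (om k)) (cnj (of_real r * cnj (om k))) (of_real t)
                    else m2 (of_real 0) 0 (cnj 0) (of_real 1))"
  define \<rho>2 where "\<rho>2 = (\<lambda>k. if k < 4 then m2 (of_real u) (of_real r * om k) (cnj (of_real r * om k)) (of_real t)
                    else m2 (of_real 0) 0 (cnj 0) (of_real 1))"
  define p where "p = (\<lambda>k::nat. if k < 4 then N\<^sup>2 / 4 else de - c\<^sup>2 / al)"
  have dec: "xst al de c = (\<Sum>k<5. p k *\<^sub>R tensor_mat (\<rho>1 k) (\<rho>2 k))"
    unfolding p_def \<rho>1_def \<rho>2_def u_def t_def r_def N_def A_def s_def
    by (rule xst_decomp[OF assms])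
  have A0: "A > 0" using assms(1) A_def by simp
  have AA: "A * A = al" using assms(1) A_def by simp
  have ss: "s * s = c" using assms(3) s_def by simp
  have N0: "N > 0" unfolding N_def using A0 assms(3) by (intro add_pos_pos divide_pos_pos)
  have "u + t = (A + c/A)/N" unfolding u_def t_def by (simp add: add_divide_distrib)
  then have ut: "u + t = 1" using N0 unfolding N_def by simp
  have u0: "0 \<le> u" "0 \<le> t" using N0 A0 assms(3) unfolding u_def t_def by auto
  have ut2: "u * t = c / N\<^sup>2" using A0 unfolding u_def t_def by (simp add: field_simps power2_eq_square)
  have r2: "r\<^sup>2 = c / N\<^sup>2" using ss unfolding r_def by (simp add: power_divide power2_eq_square)
  have rut: "r\<^sup>2 \<le> u * t" using ut2 r2 by simp
  have om1: "\<And>k. cmod (om k) = 1" by (simp add: om_def)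
  have st1: "is_state (\<rho>1 k)" "is_state (\<rho>2 k)" for k
  proof -
    have s0: "is_state (m2 (of_real 0) 0 (cnj 0) (of_real 1))"
      by (rule m2_state) auto
    have "is_state (m2 (of_real u) (of_real r * cnj (om k)) (cnj (of_real r * cnj (om k))) (of_real t))"
      by (rule m2_state) (use u0 ut rut om1 in \<open>auto simp: norm_mult\<close>)
    moreover have "is_state (m2 (of_real u) (of_real r * om k) (cnj (of_real r * om k)) (of_real t))"
      by (rule m2_state) (use u0 ut rut om1 in \<open>auto simp: norm_mult\<close>)
    ultimately show "is_state (\<rho>1 k)" "is_state (\<rho>2 k)" unfolding \<rho>1_def \<rho>2_def using s0 by auto
  qed
  have p0: "0 \<le> p k" for k
  proof -
    have "c\<^sup>2 / al \<le> de" using assms(1,4) by (simp add: divide_le_eq mult.commute)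
    then show ?thesis unfolding p_def by auto
  qed
  have psum: "(\<Sum>k<5. p k) = 1"
  proof -
    have "N\<^sup>2 = al + 2*c + c\<^sup>2/al" using A0 AA assms(1) unfolding N_def by (simp add: field_simps power2_eq_square)
    moreover have "(\<Sum>k<5. p k) = p 0 + p 1 + p 2 + p 3 + p 4" by (simp add: lt5)
    moreover have "p 0 = N\<^sup>2/4" "p 1 = N\<^sup>2/4" "p 2 = N\<^sup>2/4" "p 3 = N\<^sup>2/4" "p 4 = de - c\<^sup>2/al"
      unfolding p_def by simp_all
    ultimately show ?thesis using assms(5) by linarith
  qed
  have "is_state (xst al de c)"
    by (rule xst_state) (use assms in auto)
  then show ?thesis unfolding disentangled_def states_def
    using dec p0 st1 psum by blast
qed

lemma sigma_eqs:
  fixes a b :: real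
  assumes "b\<^sup>2 = 1 - a\<^sup>2"
  defines "\<phi> \<equiv> complex_of_real a *s tensor_vec (ket 0) (ket 0)
                + complex_of_real b *s tensor_vec (ket 1) (ket 1)"
    and "\<psi>1 \<equiv> tensor_vec (ket 0) (ket 0) + tensor_vec (ket 1) (ket 1)"
  shows "proj_onto \<phi> - (a * b / 3) *\<^sub>R (4 *\<^sub>R proj_onto \<psi>1 - mat 1) = xst (a\<^sup>2 - a*b/3) (b\<^sup>2 - a*b/3) (a*b/3)"
    and "proj_onto \<phi> = smat a b"
proof -
  have n: "(a\<^sup>2 + b\<^sup>2) = 1" using assms(1) by simp
  have d1: "(\<Sum>k\<in>UNIV. complex_of_real ((cmod (\<phi> $ k))\<^sup>2)) = 1"
    by (simp add: \<phi>_def tensor_vec_def sum22) (metis n of_real_1 of_real_add of_real_power power2_abs)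
  have d2: "(\<Sum>k\<in>UNIV. complex_of_real ((cmod (\<psi>1 $ k))\<^sup>2)) = 2"
    by (simp add: \<psi>1_def tensor_vec_def sum22)
  have pe: "proj_onto \<phi> = smat a b"
    unfolding vec_eq_iff all22 proj_onto_def d1
    by (simp add: \<phi>_def tensor_vec_def smat_def smr_def)
  then show "proj_onto \<phi> = smat a b" .
  show "proj_onto \<phi> - (a * b / 3) *\<^sub>R (4 *\<^sub>R proj_onto \<psi>1 - mat 1) = xst (a\<^sup>2 - a*b/3) (b\<^sup>2 - a*b/3) (a*b/3)"
    unfolding vec_eq_iff all22 pe
    unfolding proj_onto_def d2
    by (simp add: xst_def xsr_def smat_def smr_def \<psi>1_def tensor_vec_def mat_def power2_eq_square
       complex_sc field_simps)
qed

theorem proposition2: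
  fixes a b :: real
  assumes "a > 0" and "b > 0" and "b\<^sup>2 = 1 - a\<^sup>2"
    and "1/2 - sqrt 5 / 6 \<le> a\<^sup>2" and "a\<^sup>2 \<le> 1/2 + sqrt 5 / 6"
  defines "\<phi> \<equiv> complex_of_real a *s tensor_vec (ket 0) (ket 0)
                + complex_of_real b *s tensor_vec (ket 1) (ket 1)"
    and "\<psi>1 \<equiv> tensor_vec (ket 0) (ket 0) + tensor_vec (ket 1) (ket 1)"
  defines "\<sigma> \<equiv> proj_onto \<phi>"
    and "P\<psi>1 \<equiv> proj_onto \<psi>1"
  defines "\<sigma>' \<equiv> \<sigma> - (a * b / 3) *\<^sub>R (4 *\<^sub>R P\<psi>1 - mat 1)"
  shows "\<sigma>' \<in> disentangled
    \<and> (\<forall>\<rho>\<in>disentangled. hs_norm_sq (\<sigma>' - \<sigma>) \<le> hs_norm_sq (\<rho> - \<sigma>))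
    \<and> E_HS \<sigma> = 4/3 * a\<^sup>2 * b\<^sup>2"
proof -
  have n: "a\<^sup>2 + b\<^sup>2 = 1" using assms(3) by simp
  have s1: "\<sigma>' = xst (a\<^sup>2 - a*b/3) (b\<^sup>2 - a*b/3) (a*b/3)"
    unfolding \<sigma>'_def \<sigma>_def P\<psi>1_def \<phi>_def \<psi>1_def by (rule sigma_eqs(1)[OF assms(3)])
  have s2: "\<sigma> = smat a b"
    unfolding \<sigma>_def \<phi>_def by (rule sigma_eqs(2)[OF assms(3)])
  have r5: "sqrt 5 < 12/5"
    by (rule real_less_lsqrt) (auto simp: power2_eq_square)
  have a10: "a\<^sup>2 > 1/10" using assms(4) r5 by linarith
  have b10: "b\<^sup>2 > 1/10" using assms(5) r5 n by linarith
  have ab0: "a * b > 0" using assms(1,2) by simp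
  have al: "0 < a\<^sup>2 - a*b/3"
  proof -
    have "b\<^sup>2 < (3*a)\<^sup>2" using a10 n by (simp add: power_mult_distrib)
    then have "b < 3*a" using assms(1) by (intro power_less_imp_less_base[of b 2]) auto
    then have "a*b < a*(3*a)" using assms(1) by simp
    then show ?thesis by (simp add: power2_eq_square)
  qed
  have de: "0 \<le> b\<^sup>2 - a*b/3"
  proof -
    have "a\<^sup>2 < (3*b)\<^sup>2" using b10 n by (simp add: power_mult_distrib)
    then have "a < 3*b" using assms(2) by (intro power_less_imp_less_base[of a 2]) auto
    then have "a*b < b*(3*b)" using assms(2) by (simp add: mult.commute)
    then show ?thesis by (simp add: power2_eq_square)
  qed
  have ab3: "a * b \<ge> 1/3"
  proof -
    have "\<bar>a\<^sup>2 - 1/2\<bar> \<le> sqrt 5 / 6" using assms(4,5) unfolding abs_le_iff by linarith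
    then have "\<bar>a\<^sup>2 - 1/2\<bar>\<^sup>2 \<le> (sqrt 5 / 6)\<^sup>2" by (rule power_mono) simp
    moreover have "(sqrt 5 / 6)\<^sup>2 = 5/36" by (simp add: power_divide)
    moreover have "\<bar>a\<^sup>2 - 1/2\<bar>\<^sup>2 = (a\<^sup>2)\<^sup>2 - a\<^sup>2 + 1/4" unfolding power2_abs by (simp add: power2_eq_square algebra_simps)
    moreover have "(a*b)\<^sup>2 = a\<^sup>2 - (a\<^sup>2)\<^sup>2"
    proof -
      have "(a*b)\<^sup>2 = a\<^sup>2 * b\<^sup>2" by (simp add: power_mult_distrib)
      also have "\<dots> = a\<^sup>2 * (1 - a\<^sup>2)" using assms(3) by simp
      also have "\<dots> = a\<^sup>2 - (a\<^sup>2)\<^sup>2" by (simp add: right_diff_distrib power2_eq_square[of "a\<^sup>2"])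
      finally show ?thesis .
    qed
    moreover have "(1/3::real)\<^sup>2 = 1/9" by (simp add: power2_eq_square)
    ultimately have "(1/3)\<^sup>2 \<le> (a*b)\<^sup>2" by linarith
    then show ?thesis using ab0 by (rule power2_le_imp_le[OF _ less_imp_le])
  qed
  have cq: "(a*b/3)\<^sup>2 \<le> (a\<^sup>2 - a*b/3) * (b\<^sup>2 - a*b/3)"
  proof -
    have "(a\<^sup>2 - a*b/3) * (b\<^sup>2 - a*b/3) - (a*b/3)\<^sup>2 = (a*b) * (a*b - (a\<^sup>2 + b\<^sup>2)/3)"
      by (simp add: power2_eq_square algebra_simps)
    also have "\<dots> = (a*b) * (a*b - 1/3)" using n by simp
    also have "\<dots> \<ge> 0" using ab0 ab3 by simp
    finally show ?thesis by simp
  qed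
  have D: "\<sigma>' \<in> disentangled"
    unfolding s1 by (rule xst_dis) (use al de ab0 cq n in auto)
  have O: "\<forall>\<rho>\<in>disentangled. hs_norm_sq (\<sigma>' - \<sigma>) \<le> hs_norm_sq (\<rho> - \<sigma>)"
  proof
    fix \<rho> assume h: "\<rho> \<in> disentangled"
    show "hs_norm_sq (\<sigma>' - \<sigma>) \<le> hs_norm_sq (\<rho> - \<sigma>)"
      using opt(2)[OF n assms(1,2) dis_bound(1)[OF h] dis_bound(2)[OF h]] unfolding s1 s2 .
  qed
  have V: "hs_norm_sq (\<sigma>' - \<sigma>) = 4/3 * a\<^sup>2 * b\<^sup>2"
    using opt(1)[OF n assms(1,2) dis_bound(1)[OF D] dis_bound(2)[OF D]] unfolding s1 s2 .
  have E: "E_HS \<sigma> = hs_norm_sq (\<sigma>' - \<sigma>)"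
    unfolding E_HS_def
  proof (rule cInf_eq_minimum)
    show "hs_norm_sq (\<sigma>' - \<sigma>) \<in> (\<lambda>\<rho>. hs_norm_sq (\<rho> - \<sigma>)) ` disentangled"
      using D by (rule imageI)
    fix x assume "x \<in> (\<lambda>\<rho>. hs_norm_sq (\<rho> - \<sigma>)) ` disentangled"
    then obtain \<rho> where "\<rho> \<in> disentangled" "x = hs_norm_sq (\<rho> - \<sigma>)" by (rule imageE)
    then show "hs_norm_sq (\<sigma>' - \<sigma>) \<le> x" using O by simp
  qed
  show ?thesis using D O E V by (intro conjI) (simp_all only:)
qed

end
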